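(* Let $G$ be a group acting on a ring $A$ from the right, $a\mapsto a^g$, such that each map $a\mapsto a^g$ is a ring automorphism. (a) For all $a,b\in A$ and $g\in G$: $[D^1(ab)](g)=a^g\cdot[D^1b](g)+[D^1a](g)\cdot b$. (b) Let $m,n\in\mathbb Z_+$ with $m+n\ge1$. If $a,b\in A$ satisfy $D^ma=0$ and $D^nb=0$, then $D^{m+n-1}(ab)=0$. Equivalently, $ab\in\mathcal P_{m+n}(G,A)$ whenever $a\in\mathcal P_m(G,A)$ and $b\in\mathcal P_n(G,A)$. In particular, the set $\mathcal P(G,A)=\bigcup_{n\ge0}\mathcal P_n(G,A)$ of all polynomial-like elements is a subring of $A$. (c) For each $n\in\mathbb N$, $D^n$ is $A^G$-linear: if $a\in A^G$ then $D^n(ab)=a\,D^nb$ for all $b\in A$.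
   Context: Right action: $a^{\mathbf e}=a$, $(a^g)^h=a^{gh}$, $\mathbf e$ the identity of $G$. $A^G=\{a:a^g=a\ \forall g\}$. $\mathcal C^0(G,A)=A$; for $n\ge1$, $\mathcal C^n(G,A)$ is the set of functions $G^n\to A$ vanishing whenever some argument is $\mathbf e$ (with pointwise operations, and $a\cdot c$ defined pointwise for $a\in A$). For $n\ge1$, $(d_nc)(g_1,\dots,g_n)=[c(g_1,\dots,g_{n-1})]^{g_n}-c(g_1,\dots,g_{n-1})$; $D^0=\mathrm{id}_A$, $D^n=d_nD^{n-1}$; $\mathcal P_n(G,A)=\ker D^{n+1}$. *)

theory Defs
  imports "HOL-Algebra.Group"
begin

definition right_ring_action :: "('g, 'm) monoid_scheme \<Rightarrow> ('a::ring_1 \<Rightarrow> 'g \<Rightarrow> 'a) \<Rightarrow> bool" where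
  "right_ring_action G act \<longleftrightarrow>
     group G \<and>
     (\<forall>a. act a \<one>\<^bsub>G\<^esub> = a) \<and>
     (\<forall>a. \<forall>g\<in>carrier G. \<forall>h\<in>carrier G. act (act a g) h = act a (g \<otimes>\<^bsub>G\<^esub> h)) \<and>
     (\<forall>g\<in>carrier G. bij (\<lambda>a. act a g) \<and>
        (\<forall>a b. act (a + b) g = act a g + act b g) \<and>
        (\<forall>a b. act (a * b) g = act a g * act b g) \<and>
        act 1 g = 1)"

text \<open>n-cochains are represented as functions on lists of group elements; only lists of
  length n with entries in carrier G are meaningful.\<close>
primrec Dop :: "('a::ring_1 \<Rightarrow> 'g \<Rightarrow> 'a) \<Rightarrow> nat \<Rightarrow> 'a \<Rightarrow> ('g list \<Rightarrow> 'a)" where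
  "Dop act 0 a = (\<lambda>gs. a)"
| "Dop act (Suc n) a = (\<lambda>gs. act (Dop act n a (butlast gs)) (last gs) - Dop act n a (butlast gs))"

definition tuples :: "('g, 'm) monoid_scheme \<Rightarrow> nat \<Rightarrow> 'g list set" where
  "tuples G n = {gs. length gs = n \<and> set gs \<subseteq> carrier G}"

definition cochain_zero :: "('g, 'm) monoid_scheme \<Rightarrow> nat \<Rightarrow> ('g list \<Rightarrow> 'a::zero) \<Rightarrow> bool" where
  "cochain_zero G n c \<longleftrightarrow> (\<forall>gs\<in>tuples G n. c gs = 0)"

definition Pn :: "('g, 'm) monoid_scheme \<Rightarrow> ('a::ring_1 \<Rightarrow> 'g \<Rightarrow> 'a) \<Rightarrow> nat \<Rightarrow> 'a set" where
  "Pn G act n = {a. cochain_zero G (Suc n) (Dop act (Suc n) a)}"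

definition Pall :: "('g, 'm) monoid_scheme \<Rightarrow> ('a::ring_1 \<Rightarrow> 'g \<Rightarrow> 'a) \<Rightarrow> 'a set" where
  "Pall G act = (\<Union>n. Pn G act n)"

definition invariants :: "('g, 'm) monoid_scheme \<Rightarrow> ('a \<Rightarrow> 'g \<Rightarrow> 'a) \<Rightarrow> 'a set" where
  "invariants G act = {a. \<forall>g\<in>carrier G. act a g = a}"

end

theory Submission
  imports Defs
begin

context
  fixes G :: "('g, 'm) monoid_scheme" and act :: "'a::ring_1 \<Rightarrow> 'g \<Rightarrow> 'a"
  assumes RA: "right_ring_action G act"
begin

lemma grp: "group G" using RA unfolding right_ring_action_def by blast

lemma act_add: "g \<in> carrier G \<Longrightarrow> act (x + y) g = act x g + act y g"
  using RA unfolding right_ring_action_def by blast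

lemma act_mult: "g \<in> carrier G \<Longrightarrow> act (x * y) g = act x g * act y g"
  using RA unfolding right_ring_action_def by blast

lemma act_one: "g \<in> carrier G \<Longrightarrow> act 1 g = 1"
  using RA unfolding right_ring_action_def by blast

lemma act_act: "g \<in> carrier G \<Longrightarrow> h \<in> carrier G \<Longrightarrow> act (act a g) h = act a (g \<otimes>\<^bsub>G\<^esub> h)"
  using RA unfolding right_ring_action_def by blast

lemma act_zero: "g \<in> carrier G \<Longrightarrow> act 0 g = 0"
  using act_add[of g 0 0] by simp

lemma act_minus: "g \<in> carrier G \<Longrightarrow> act (- x) g = - act x g"
proof -
  assume g: "g \<in> carrier G"
  have "act x g + act (- x) g = 0" using act_add[OF g, of x "-x"] act_zero[OF g] by simp
  then show ?thesis by (metis minus_unique)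
qed

lemma act_diff: "g \<in> carrier G \<Longrightarrow> act (x - y) g = act x g - act y g"
  using act_add[of g x "-y"] act_minus[of g y] by simp

lemma tup_step:
  assumes "length gs = Suc k" "set gs \<subseteq> carrier G"
  shows "length (butlast gs) = k" "set (butlast gs) \<subseteq> carrier G" "last gs \<in> carrier G"
  using assms by (auto dest: in_set_butlastD) (metis last_in_set list.size(3) nat.distinct(1) subsetD)

lemma Dop_zero: "length gs = k \<Longrightarrow> set gs \<subseteq> carrier G \<Longrightarrow> Dop act k 0 gs = 0"
proof (induction k arbitrary: gs)
  case 0 then show ?case by simp
next
  case (Suc k)
  note t = tup_step[OF Suc.prems]
  show ?case using Suc.IH[OF t(1,2)] act_zero[OF t(3)] by simp
qed

lemma Dop_add: "length gs = k \<Longrightarrow> set gs \<subseteq> carrier G \<Longrightarrow> Dop act k (x + y) gs = Dop act k x gs + Dop act k y gs"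
proof (induction k arbitrary: gs)
  case 0 then show ?case by simp
next
  case (Suc k)
  note t = tup_step[OF Suc.prems]
  show ?case using Suc.IH[OF t(1,2)] act_add[OF t(3)] by (simp add: algebra_simps)
qed

lemma Dop_minus: "length gs = k \<Longrightarrow> set gs \<subseteq> carrier G \<Longrightarrow> Dop act k (- x) gs = - Dop act k x gs"
proof (induction k arbitrary: gs)
  case 0 then show ?case by simp
next
  case (Suc k)
  note t = tup_step[OF Suc.prems]
  show ?case using Suc.IH[OF t(1,2)] act_minus[OF t(3)] by (simp add: algebra_simps)
qed

lemma Dop_diff: "length gs = k \<Longrightarrow> set gs \<subseteq> carrier G \<Longrightarrow> Dop act k (x - y) gs = Dop act k x gs - Dop act k y gs"
  using Dop_add[of gs k x "-y"] Dop_minus[of gs k y] by simp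

lemma Dop_cons: "length hs = k \<Longrightarrow> Dop act (Suc k) a (g # hs) = Dop act k (act a g - a) hs"
proof (induction k arbitrary: hs)
  case 0 then show ?case by simp
next
  case (Suc k)
  then have ne: "hs \<noteq> []" by auto
  have "Dop act (Suc (Suc k)) a (g # hs) = act (Dop act (Suc k) a (g # butlast hs)) (last hs) - Dop act (Suc k) a (g # butlast hs)"
    using ne by simp
  also have "\<dots> = Dop act (Suc k) (act a g - a) hs"
    using Suc.IH[of "butlast hs"] Suc.prems by simp
  finally show ?case .
qed

lemma Dop_inv: "length gs = k \<Longrightarrow> set gs \<subseteq> carrier G \<Longrightarrow> a \<in> invariants G act \<Longrightarrow>
   Dop act k (a * b) gs = a * Dop act k b gs"
proof (induction k arbitrary: gs)
  case 0 then show ?case by simp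
next
  case (Suc k)
  note t = tup_step[OF Suc.prems(1,2)]
  have "act a (last gs) = a" using Suc.prems(3) t(3) unfolding invariants_def by blast
  then show ?case using Suc.IH[OF t(1,2) Suc.prems(3)] act_mult[OF t(3)] by (simp add: algebra_simps)
qed

lemma Dop_conj:
  assumes "g \<in> carrier G"
  shows "length hs = k \<Longrightarrow> set hs \<subseteq> carrier G \<Longrightarrow>
     Dop act k (act a g) hs = act (Dop act k a (map (\<lambda>h. g \<otimes>\<^bsub>G\<^esub> h \<otimes>\<^bsub>G\<^esub> inv\<^bsub>G\<^esub> g) hs)) g"
proof (induction k arbitrary: hs)
  case 0 then show ?case by simp
next
  case (Suc k)
  note t = tup_step[OF Suc.prems]
  define c where "c = (\<lambda>h. g \<otimes>\<^bsub>G\<^esub> h \<otimes>\<^bsub>G\<^esub> inv\<^bsub>G\<^esub> g)"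
  define Y where "Y = Dop act k a (map c (butlast hs))"
  have ne: "hs \<noteq> []" using Suc.prems by auto
  have cc: "c (last hs) \<in> carrier G" unfolding c_def using t(3) assms grp by (simp add: group.subgroup_self subgroup.m_closed group.inv_closed monoid.m_closed group.is_monoid)
  have gg: "c (last hs) \<otimes>\<^bsub>G\<^esub> g = g \<otimes>\<^bsub>G\<^esub> last hs" unfolding c_def using t(3) assms grp
    by (simp add: group.is_monoid monoid.m_assoc group.l_inv group.inv_closed monoid.m_closed)
  have IH: "Dop act k (act a g) (butlast hs) = act Y g" using Suc.IH[OF t(1,2)] unfolding Y_def c_def by simp
  have "Dop act (Suc k) (act a g) hs = act (act Y g) (last hs) - act Y g" using IH by simp
  also have "act (act Y g) (last hs) = act (act Y (c (last hs))) g"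
    using act_act[OF assms t(3)] act_act[OF cc assms] gg by simp
  also have "act (act Y (c (last hs))) g - act Y g = act (act Y (c (last hs)) - Y) g"
    using act_diff[OF assms] by simp
  also have "act Y (c (last hs)) - Y = Dop act (Suc k) a (map c hs)"
    using ne unfolding Y_def by (simp add: map_butlast last_map)
  finally show ?case unfolding c_def .
qed

lemma cz_conj:
  assumes "g \<in> carrier G" "cochain_zero G k (Dop act k a)"
  shows "cochain_zero G k (Dop act k (act a g))"
  unfolding cochain_zero_def
proof
  fix hs assume "hs \<in> tuples G k"
  then have h: "length hs = k" "set hs \<subseteq> carrier G" unfolding tuples_def by auto
  let ?m = "map (\<lambda>h. g \<otimes>\<^bsub>G\<^esub> h \<otimes>\<^bsub>G\<^esub> inv\<^bsub>G\<^esub> g) hs"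
  have "?m \<in> tuples G k" using h assms(1) grp unfolding tuples_def
    by (auto simp: group.is_monoid monoid.m_closed group.inv_closed)
  then have "Dop act k a ?m = 0" using assms(2) unfolding cochain_zero_def by blast
  then show "Dop act k (act a g) hs = 0" using Dop_conj[OF assms(1) h] act_zero[OF assms(1)] by simp
qed

lemma cz_delta:
  assumes "g \<in> carrier G" "cochain_zero G (Suc k) (Dop act (Suc k) a)"
  shows "cochain_zero G k (Dop act k (act a g - a))"
  unfolding cochain_zero_def
proof
  fix hs assume hs: "hs \<in> tuples G k"
  then have "g # hs \<in> tuples G (Suc k)" using assms(1) unfolding tuples_def by auto
  then have "Dop act (Suc k) a (g # hs) = 0" using assms(2) unfolding cochain_zero_def by blast
  moreover have "length hs = k" using hs unfolding tuples_def by simp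
  ultimately show "Dop act k (act a g - a) hs = 0" using Dop_cons[of hs k a g] by simp
qed

lemma cz_zero0: "cochain_zero G 0 (Dop act 0 a) \<Longrightarrow> a = 0"
  unfolding cochain_zero_def tuples_def by auto

lemma cz_of_zero: "cochain_zero G k (Dop act k 0)"
  unfolding cochain_zero_def tuples_def using Dop_zero by auto

lemma main_b:
  "\<forall>m n a b. m + n = N \<longrightarrow> N \<ge> 1 \<longrightarrow> cochain_zero G m (Dop act m a) \<longrightarrow>
     cochain_zero G n (Dop act n b) \<longrightarrow> cochain_zero G (N - 1) (Dop act (N - 1) (a * b))"
proof (induction N)
  case 0 then show ?case by simp
next
  case (Suc N)
  show ?case
  proof (intro allI impI)
    fix m n a b
    assume mn: "m + n = Suc N" and "Suc N \<ge> 1" and ca: "cochain_zero G m (Dop act m a)"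
      and cb: "cochain_zero G n (Dop act n b)"
    show "cochain_zero G (Suc N - 1) (Dop act (Suc N - 1) (a * b))"
    proof (cases "m = 0 \<or> n = 0")
      case True
      then have "a * b = 0"
      proof
        assume "m = 0" then have "a = 0" using ca cz_zero0[of a] by simp
        then show ?thesis by simp
      next
        assume "n = 0" then have "b = 0" using cb cz_zero0[of b] by simp
        then show ?thesis by simp
      qed
      then show ?thesis using cz_of_zero by simp
    next
      case False
      then obtain m' n' where m': "m = Suc m'" and n': "n = Suc n'" by (metis not0_implies_Suc)
      then have N: "N = Suc (m' + n')" using mn by simp
      show ?thesis unfolding cochain_zero_def
      proof
        fix gs assume gs: "gs \<in> tuples G (Suc N - 1)"
        then obtain g hs where gh: "gs = g # hs" "g \<in> carrier G" "length hs = m' + n'" "set hs \<subseteq> carrier G"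
          unfolding tuples_def N by (cases gs) auto
        have hsT: "hs \<in> tuples G (m' + n')" using gh unfolding tuples_def by simp
        have "Dop act (Suc N - 1) (a * b) gs = Dop act (m' + n') (act (a*b) g - a * b) hs"
          using gh N Dop_cons by simp
        also have "act (a*b) g - a * b = act a g * (act b g - b) + (act a g - a) * b"
          using act_mult[OF gh(2)] by (simp add: algebra_simps)
        also have "Dop act (m' + n') (act a g * (act b g - b) + (act a g - a) * b) hs
           = Dop act (m' + n') (act a g * (act b g - b)) hs + Dop act (m' + n') ((act a g - a) * b) hs"
          using Dop_add gh by simp
        also have "Dop act (m' + n') (act a g * (act b g - b)) hs = 0"
        proof -
          have 1: "cochain_zero G m (Dop act m (act a g))" using cz_conj[OF gh(2) ca] .
          have 2: "cochain_zero G n' (Dop act n' (act b g - b))" using cz_delta[OF gh(2)] cb n' by simp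
          have "cochain_zero G (N - 1) (Dop act (N - 1) (act a g * (act b g - b)))"
            using Suc.IH 1 2 m' N by (metis add_Suc le_add1 plus_1_eq_Suc)
          then show ?thesis using hsT N unfolding cochain_zero_def by simp
        qed
        also have "Dop act (m' + n') ((act a g - a) * b) hs = 0"
        proof -
          have 1: "cochain_zero G m' (Dop act m' (act a g - a))" using cz_delta[OF gh(2)] ca m' by simp
          have "cochain_zero G (N - 1) (Dop act (N - 1) ((act a g - a) * b))"
            using Suc.IH 1 cb n' N by (metis add_Suc_right le_add1 plus_1_eq_Suc)
          then show ?thesis using hsT N unfolding cochain_zero_def by simp
        qed
        finally show "Dop act (Suc N - 1) (a * b) gs = 0" by simp
      qed
    qed
  qed
qed

lemma Pn_mono1: "a \<in> Pn G act k \<Longrightarrow> a \<in> Pn G act (Suc k)"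
  unfolding Pn_def cochain_zero_def
proof (safe)
  fix gs assume A: "\<forall>gs\<in>tuples G (Suc k). Dop act (Suc k) a gs = 0" and gs: "gs \<in> tuples G (Suc (Suc k))"
  then have t: "length gs = Suc (Suc k)" "set gs \<subseteq> carrier G" unfolding tuples_def by auto
  note s = tup_step[OF t]
  have "butlast gs \<in> tuples G (Suc k)" using s unfolding tuples_def by simp
  then have "Dop act (Suc k) a (butlast gs) = 0" using A by blast
  then show "Dop act (Suc (Suc k)) a gs = 0" using act_zero[OF s(3)] by simp
qed

lemma Pn_mono: "a \<in> Pn G act k \<Longrightarrow> k \<le> j \<Longrightarrow> a \<in> Pn G act j"
proof -
  assume a: "a \<in> Pn G act k" and kj: "k \<le> j"
  show ?thesis using kj
  proof (induction rule: dec_induct)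
    case base then show ?case using a .
  next
    case (step i) then show ?case using Pn_mono1 by blast
  qed
qed

lemma Pn_add: "a \<in> Pn G act k \<Longrightarrow> b \<in> Pn G act k \<Longrightarrow> a + b \<in> Pn G act k"
  unfolding Pn_def cochain_zero_def
proof (safe)
  fix gs assume "\<forall>gs\<in>tuples G (Suc k). Dop act (Suc k) a gs = 0" "\<forall>gs\<in>tuples G (Suc k). Dop act (Suc k) b gs = 0"
    and gs: "gs \<in> tuples G (Suc k)"
  moreover have "Dop act (Suc k) (a + b) gs = Dop act (Suc k) a gs + Dop act (Suc k) b gs"
    using gs Dop_add unfolding tuples_def by blast
  ultimately show "Dop act (Suc k) (a + b) gs = 0" by simp
qed

lemma Pn_minus: "a \<in> Pn G act k \<Longrightarrow> - a \<in> Pn G act k"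
  unfolding Pn_def cochain_zero_def
proof (safe)
  fix gs assume "\<forall>gs\<in>tuples G (Suc k). Dop act (Suc k) a gs = 0"
    and gs: "gs \<in> tuples G (Suc k)"
  moreover have "Dop act (Suc k) (- a) gs = - Dop act (Suc k) a gs"
    using gs Dop_minus unfolding tuples_def by blast
  ultimately show "Dop act (Suc k) (- a) gs = 0" by simp
qed

lemma Pn_mult: "a \<in> Pn G act m \<Longrightarrow> b \<in> Pn G act n \<Longrightarrow> a * b \<in> Pn G act (m + n)"
proof -
  assume a: "a \<in> Pn G act m" and b: "b \<in> Pn G act n"
  have "cochain_zero G (Suc m + Suc n - 1) (Dop act (Suc m + Suc n - 1) (a * b))"
    using main_b[of "Suc m + Suc n", rule_format, of "Suc m" "Suc n" a b] a b unfolding Pn_def by simp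
  then show ?thesis unfolding Pn_def by simp
qed

end

theorem proposition2p1:
  fixes G :: "('g, 'm) monoid_scheme" and act :: "'a::ring_1 \<Rightarrow> 'g \<Rightarrow> 'a"
  assumes "right_ring_action G act"
  shows "(\<forall>a b. \<forall>g\<in>carrier G.
            Dop act 1 (a * b) [g] = act a g * Dop act 1 b [g] + Dop act 1 a [g] * b)
       \<and> (\<forall>m n a b. m + n \<ge> 1 \<longrightarrow> cochain_zero G m (Dop act m a) \<longrightarrow>
            cochain_zero G n (Dop act n b) \<longrightarrow> cochain_zero G (m + n - 1) (Dop act (m + n - 1) (a * b)))
       \<and> (\<forall>m n a b. a \<in> Pn G act m \<longrightarrow> b \<in> Pn G act n \<longrightarrow> a * b \<in> Pn G act (m + n))
       \<and> (0 \<in> Pall G act \<and> 1 \<in> Pall G act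
          \<and> (\<forall>a\<in>Pall G act. \<forall>b\<in>Pall G act. a + b \<in> Pall G act \<and> a - b \<in> Pall G act
                 \<and> - a \<in> Pall G act \<and> a * b \<in> Pall G act))
       \<and> (\<forall>n a b. a \<in> invariants G act \<longrightarrow>
            (\<forall>gs\<in>tuples G n. Dop act n (a * b) gs = a * Dop act n b gs))"
proof (intro conjI)
  note RA = assms
  show "\<forall>a b. \<forall>g\<in>carrier G.
            Dop act 1 (a * b) [g] = act a g * Dop act 1 b [g] + Dop act 1 a [g] * b"
    using act_mult[OF RA] by (simp add: algebra_simps)
  show "\<forall>m n a b. m + n \<ge> 1 \<longrightarrow> cochain_zero G m (Dop act m a) \<longrightarrow>
            cochain_zero G n (Dop act n b) \<longrightarrow> cochain_zero G (m + n - 1) (Dop act (m + n - 1) (a * b))"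
    using main_b[OF RA] by blast
  show "\<forall>m n a b. a \<in> Pn G act m \<longrightarrow> b \<in> Pn G act n \<longrightarrow> a * b \<in> Pn G act (m + n)"
    using Pn_mult[OF RA] by blast
  have z: "0 \<in> Pn G act 0" using cz_of_zero[OF RA, of 1] unfolding Pn_def by (simp del: Dop.simps)
  then show "0 \<in> Pall G act" unfolding Pall_def by blast
  have "1 \<in> Pn G act 0" unfolding Pn_def cochain_zero_def tuples_def
    using act_one[OF RA] by (auto simp: length_Suc_conv)
  then show "1 \<in> Pall G act" unfolding Pall_def by blast
  show "\<forall>a\<in>Pall G act. \<forall>b\<in>Pall G act. a + b \<in> Pall G act \<and> a - b \<in> Pall G act
                 \<and> - a \<in> Pall G act \<and> a * b \<in> Pall G act"
  proof (intro ballI conjI)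
    fix a b assume "a \<in> Pall G act" "b \<in> Pall G act"
    then obtain m n where a: "a \<in> Pn G act m" and b: "b \<in> Pn G act n" unfolding Pall_def by blast
    have a': "a \<in> Pn G act (max m n)" and b': "b \<in> Pn G act (max m n)"
      using Pn_mono[OF RA a] Pn_mono[OF RA b] by auto
    show "a + b \<in> Pall G act" using Pn_add[OF RA a' b'] unfolding Pall_def by blast
    show "a - b \<in> Pall G act" using Pn_add[OF RA a' Pn_minus[OF RA b']] unfolding Pall_def by auto
    show "- a \<in> Pall G act" using Pn_minus[OF RA a] unfolding Pall_def by blast
    show "a * b \<in> Pall G act" using Pn_mult[OF RA a b] unfolding Pall_def by blast
  qed
  show "\<forall>n a b. a \<in> invariants G act \<longrightarrow>
            (\<forall>gs\<in>tuples G n. Dop act n (a * b) gs = a * Dop act n b gs)"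
    using Dop_inv[OF RA] unfolding tuples_def by blast
qed

end
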